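(* Let $k$ and $c$ be positive integers, let $G$ be a finite simple graph of order $n$, and let $L \subseteq V(G)$ be fixed. Let $C_{1},\dots,C_{k}$ be pairwise vertex-disjoint $c$-chorded cycles of $G$, each with a fixed orientation, such that $C^{*} := \bigcup_{p=1}^{k} C_{p}$ is not a spanning subgraph of $G$, and such that among all choices of $k$ pairwise vertex-disjoint $c$-chorded cycles in $G$, (A1) $|V(C^{*}) \cap L|$ is as large as possible, and (A2) subject to (A1), $|V(C^{*})|$ is as large as possible. Let $H^{*} = G - V(C^{*})$ and let $H$ be a component of $H^{*}$. Let $C = C_{p}$ for some $1 \le p \le k$, let $v \in N_{C}(H)$ and $x \in V(H)$. Then (i) $v^{+}x \notin E(G)$, and (ii) $d_{H^{*}\cup C}(v^{+}) + d_{H^{*}\cup C}(x) \le |V(H^{*}) \cup V(C)| - 1$.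
   Context: A cycle $C$ in $G$ is a $c$-chorded cycle if $|E(G[V(C)]) \setminus E(C)| \ge c$, where $G[X]$ is the induced subgraph on $X$. For $v \in V(G)$ and $X \subseteq V(G)$, $N_{X}(v) = N_{G}(v) \cap X$ and $d_{X}(v) = |N_{X}(v)|$; for a subgraph $F$ we write $N_{F}$, $d_{F}$ for $N_{V(F)}$, $d_{V(F)}$, and $H^{*}\cup C$ denotes the vertex set $V(H^{*}) \cup V(C)$. For $V' \subseteq V(G)$, $N_{X}(V') = \bigcup_{u \in V'} N_{X}(u)$. For a vertex $v$ on an oriented cycle $C$, $v^{+}$ denotes the successor of $v$ along the orientation of $C$. *)

theory Defs
  imports Main
begin

definition simple_graph :: "'a set \<Rightarrow> ('a \<Rightarrow> 'a \<Rightarrow> bool) \<Rightarrow> bool" where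
  "simple_graph V E \<longleftrightarrow> finite V \<and> (\<forall>u v. E u v \<longrightarrow> u \<in> V \<and> v \<in> V)
     \<and> (\<forall>u v. E u v \<longrightarrow> E v u) \<and> (\<forall>u. \<not> E u u)"

definition cyc_succ :: "'a list \<Rightarrow> nat \<Rightarrow> 'a" where
  "cyc_succ xs i = xs ! ((i + 1) mod length xs)"

definition is_cycle :: "'a set \<Rightarrow> ('a \<Rightarrow> 'a \<Rightarrow> bool) \<Rightarrow> 'a list \<Rightarrow> bool" where
  "is_cycle V E xs \<longleftrightarrow> length xs \<ge> 3 \<and> distinct xs \<and> set xs \<subseteq> V
     \<and> (\<forall>i < length xs. E (xs ! i) (cyc_succ xs i))"

definition cyc_edges :: "'a list \<Rightarrow> 'a set set" where
  "cyc_edges xs = {{xs ! i, cyc_succ xs i} | i. i < length xs}"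

definition ind_edges :: "('a \<Rightarrow> 'a \<Rightarrow> bool) \<Rightarrow> 'a set \<Rightarrow> 'a set set" where
  "ind_edges E S = {{u, v} | u v. u \<in> S \<and> v \<in> S \<and> E u v}"

definition chorded_cycle :: "'a set \<Rightarrow> ('a \<Rightarrow> 'a \<Rightarrow> bool) \<Rightarrow> nat \<Rightarrow> 'a list \<Rightarrow> bool" where
  "chorded_cycle V E c xs \<longleftrightarrow> is_cycle V E xs
     \<and> card (ind_edges E (set xs) - cyc_edges xs) \<ge> c"

definition disjoint_chorded_family ::
  "'a set \<Rightarrow> ('a \<Rightarrow> 'a \<Rightarrow> bool) \<Rightarrow> nat \<Rightarrow> nat \<Rightarrow> (nat \<Rightarrow> 'a list) \<Rightarrow> bool" where
  "disjoint_chorded_family V E c k Cs \<longleftrightarrow>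
     (\<forall>p < k. chorded_cycle V E c (Cs p))
     \<and> (\<forall>p < k. \<forall>q < k. p \<noteq> q \<longrightarrow> set (Cs p) \<inter> set (Cs q) = {})"

definition family_verts :: "nat \<Rightarrow> (nat \<Rightarrow> 'a list) \<Rightarrow> 'a set" where
  "family_verts k Cs = (\<Union>p < k. set (Cs p))"

definition component_of :: "('a \<Rightarrow> 'a \<Rightarrow> bool) \<Rightarrow> 'a set \<Rightarrow> 'a set \<Rightarrow> bool" where
  "component_of E S H \<longleftrightarrow> (\<exists>x \<in> S. H = {y \<in> S.
      (\<lambda>a b. E a b \<and> a \<in> S \<and> b \<in> S)\<^sup>*\<^sup>* x y})"

definition nbhd :: "('a \<Rightarrow> 'a \<Rightarrow> bool) \<Rightarrow> 'a set \<Rightarrow> 'a \<Rightarrow> 'a set" where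
  "nbhd E X v = {u \<in> X. E v u}"

definition deg_in :: "('a \<Rightarrow> 'a \<Rightarrow> bool) \<Rightarrow> 'a set \<Rightarrow> 'a \<Rightarrow> nat" where
  "deg_in E X v = card (nbhd E X v)"

definition nbhd_set :: "('a \<Rightarrow> 'a \<Rightarrow> bool) \<Rightarrow> 'a set \<Rightarrow> 'a set \<Rightarrow> 'a set" where
  "nbhd_set E X V' = (\<Union>u \<in> V'. nbhd E X u)"

end

theory Submission
  imports Defs
begin



fun pairs :: "'a list \<Rightarrow> ('a \<times> 'a) list" where
  "pairs (a # b # t) = (a, b) # pairs (b # t)"
| "pairs _ = []"

definition cpairs :: "'a list \<Rightarrow> ('a \<times> 'a) list" where
  "cpairs xs = pairs (xs @ [hd xs])"

lemma pairs_Cons: "l \<noteq> [] \<Longrightarrow> pairs (a # l) = (a, hd l) # pairs l"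
  by (cases l) auto

lemma pairs_append: "l1 \<noteq> [] \<Longrightarrow> l2 \<noteq> [] \<Longrightarrow>
   pairs (l1 @ l2) = pairs l1 @ (last l1, hd l2) # pairs l2"
proof (induction l1 rule: pairs.induct)
  case (1 a b t) then show ?case by simp
next
  case ("2_1") then show ?case by simp
next
  case ("2_2" a) then show ?case by (simp add: pairs_Cons)
qed

lemma set_pairs_sub: "set (pairs l) \<subseteq> set l \<times> set l"
  by (induction l rule: pairs.induct) auto

lemma pairs_rev: "pairs (rev l) = rev (map prod.swap (pairs l))"
proof (induction l rule: pairs.induct)
  case (1 a b t)
  have "pairs (rev (a # b # t)) = pairs (rev (b # t) @ [a])" by simp
  also have "\<dots> = pairs (rev (b # t)) @ [(b, a)]"
    by (subst pairs_append) (auto simp: last_rev)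
  finally show ?case using 1 by simp
qed auto

lemma set_pairs_nth: "set (pairs l) = {(l ! j, l ! Suc j) | j. Suc j < length l}"
proof (induction l rule: pairs.induct)
  case (1 a b t)
  show ?case
  proof
    show "set (pairs (a # b # t)) \<subseteq> {((a # b # t) ! j, (a # b # t) ! Suc j) |j. Suc j < length (a # b # t)}"
    proof
      fix z assume "z \<in> set (pairs (a # b # t))"
      then have "z = (a, b) \<or> z \<in> set (pairs (b # t))" by simp
      then show "z \<in> {((a # b # t) ! j, (a # b # t) ! Suc j) |j. Suc j < length (a # b # t)}"
      proof
        assume "z = (a, b)" then show ?thesis by (intro CollectI exI[of _ 0]) auto
      next
        assume "z \<in> set (pairs (b # t))"
        then obtain j where "z = ((b # t) ! j, (b # t) ! Suc j)" "Suc j < length (b # t)"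
          using 1 by auto
        then show ?thesis by (intro CollectI exI[of _ "Suc j"]) auto
      qed
    qed
  next
    show "{((a # b # t) ! j, (a # b # t) ! Suc j) |j. Suc j < length (a # b # t)} \<subseteq> set (pairs (a # b # t))"
    proof
      fix z assume "z \<in> {((a # b # t) ! j, (a # b # t) ! Suc j) |j. Suc j < length (a # b # t)}"
      then obtain j where j: "z = ((a # b # t) ! j, (a # b # t) ! Suc j)" "Suc j < length (a # b # t)" by auto
      show "z \<in> set (pairs (a # b # t))"
      proof (cases j)
        case 0 then show ?thesis using j by simp
      next
        case (Suc j') then have "z \<in> set (pairs (b # t))" using j 1 by auto
        then show ?thesis by simp
      qed
    qed
  qed
qed auto

lemma cyc_pairs: assumes "xs \<noteq> []"
  shows "{(xs ! i, cyc_succ xs i) | i. i < length xs} = set (cpairs xs)"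
proof -
  have "\<And>j. j < length xs \<Longrightarrow> (xs @ [hd xs]) ! Suc j = cyc_succ xs j"
  proof -
    fix j assume j: "j < length xs"
    show "(xs @ [hd xs]) ! Suc j = cyc_succ xs j"
    proof (cases "Suc j < length xs")
      case True then show ?thesis by (simp add: cyc_succ_def nth_append)
    next
      case False then have "Suc j = length xs" using j by simp
      then show ?thesis using assms by (simp add: cyc_succ_def nth_append hd_conv_nth)
    qed
  qed
  moreover have "\<And>j. j < length xs \<Longrightarrow> (xs @ [hd xs]) ! j = xs ! j" by (simp add: nth_append)
  ultimately show ?thesis unfolding cpairs_def set_pairs_nth by force
qed

lemma cyc_edges_cpairs: "xs \<noteq> [] \<Longrightarrow> cyc_edges xs = (\<lambda>(a, b). {a, b}) ` set (cpairs xs)"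
  unfolding cyc_edges_def cyc_pairs[symmetric] by auto

lemma cyc_E_cpairs: "xs \<noteq> [] \<Longrightarrow> (\<forall>i < length xs. E (xs ! i) (cyc_succ xs i)) \<longleftrightarrow> (\<forall>(a, b) \<in> set (cpairs xs). E a b)"
  unfolding cyc_pairs[symmetric] by auto

lemma cpairs_rotate1: "set (cpairs (rotate1 xs)) = set (cpairs xs)"
proof (cases xs)
  case (Cons a l)
  show ?thesis
  proof (cases l)
    case Nil then show ?thesis using Cons by simp
  next
    case (Cons b t)
    have "cpairs (rotate1 xs) = pairs (l @ [a, hd l])" using Cons \<open>xs = a # l\<close> by (simp add: cpairs_def)
    also have "\<dots> = pairs l @ (last l, a) # pairs [a, hd l]"
      using pairs_append[of l "[a, hd l]"] Cons by simp
    finally have 1: "cpairs (rotate1 xs) = pairs l @ [(last l, a), (a, hd l)]" by simp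
    have "cpairs xs = pairs (a # (l @ [a]))" using \<open>xs = a # l\<close> by (simp add: cpairs_def)
    also have "\<dots> = (a, hd l) # pairs (l @ [a])" using Cons by (simp add: pairs_Cons)
    also have "\<dots> = (a, hd l) # pairs l @ [(last l, a)]" using pairs_append[of l "[a]"] Cons by simp
    finally show ?thesis using 1 by auto
  qed
qed (simp add: cpairs_def)

lemma cpairs_rotate: "set (cpairs (rotate n xs)) = set (cpairs xs)"
  by (induction n) (auto simp: cpairs_rotate1)

lemma cpairs_unique: assumes "distinct xs" "(a, b) \<in> set (cpairs xs)" "(a, b') \<in> set (cpairs xs)"
  shows "b = b'"
proof -
  have ne: "xs \<noteq> []" using assms(2) by (auto simp: cpairs_def)
  obtain i where i: "i < length xs" "a = xs ! i" "b = cyc_succ xs i" using assms(2) cyc_pairs[OF ne] by (smt (verit, best) Pair_inject mem_Collect_eq)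
  obtain j where j: "j < length xs" "a = xs ! j" "b' = cyc_succ xs j" using assms(3) cyc_pairs[OF ne] by (smt (verit, best) Pair_inject mem_Collect_eq)
  have "i = j" using i j assms(1) nth_eq_iff_index_eq by metis
  then show ?thesis using i j by simp
qed




lemma pairs_prefix: "set (pairs l1) \<subseteq> set (pairs (l1 @ l2))"
proof (cases "l1 = [] \<or> l2 = []")
  case True then show ?thesis by auto
next
  case False then show ?thesis by (simp add: pairs_append) blast
qed

lemma walk_path:
  assumes "R\<^sup>*\<^sup>* a b"
  shows "\<exists>P. P \<noteq> [] \<and> hd P = a \<and> last P = b \<and> distinct P \<and> (\<forall>(s, t) \<in> set (pairs P). R s t)
     \<and> set P \<subseteq> {z. R\<^sup>*\<^sup>* a z}"
  using assms
proof (induction rule: rtranclp_induct)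
  case base
  show ?case by (intro exI[of _ "[a]"]) auto
next
  case (step b c)
  then obtain P where P: "P \<noteq> []" "hd P = a" "last P = b" "distinct P"
    "\<forall>(s, t) \<in> set (pairs P). R s t" "set P \<subseteq> {z. R\<^sup>*\<^sup>* a z}" by blast
  show ?case
  proof (cases "c \<in> set P")
    case True
    then obtain P1 P2 where sp: "P = P1 @ c # P2" by (meson split_list)
    have pp: "set (pairs (P1 @ [c])) \<subseteq> set (pairs P)" using pairs_prefix[of "P1 @ [c]" P2] sp by simp
    have "hd (P1 @ [c]) = a" using P(2) sp by (cases P1) auto
    then show ?thesis using P sp pp by (intro exI[of _ "P1 @ [c]"]) auto
  next
    case False
    have "set (pairs (P @ [c])) = set (pairs P) \<union> {(b, c)}" using P by (simp add: pairs_append)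
    then show ?thesis using P False step by (intro exI[of _ "P @ [c]"]) auto
  qed
qed

lemma rtranclp_sym: assumes "\<And>a b. R a b \<Longrightarrow> R b a" "R\<^sup>*\<^sup>* a b" shows "R\<^sup>*\<^sup>* b a"
  using assms(2)
proof (induction rule: rtranclp_induct)
  case (step y z) then show ?case using assms(1) by (meson converse_rtranclp_into_rtranclp)
qed auto

lemma comp_sub: "component_of E S H \<Longrightarrow> H \<subseteq> S"
  unfolding component_of_def by auto

lemma comp_closed: assumes "component_of E S H" "z \<in> H" "w \<in> S" "E z w" shows "w \<in> H"
proof -
  obtain x0 where x0: "x0 \<in> S" "H = {y \<in> S. (\<lambda>a b. E a b \<and> a \<in> S \<and> b \<in> S)\<^sup>*\<^sup>* x0 y}"
    using assms(1) unfolding component_of_def by blast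
  then show ?thesis using assms by (auto intro: rtranclp.rtrancl_into_rtrancl)
qed

lemma comp_path:
  assumes sym: "\<And>a b. E a b \<Longrightarrow> E b a" and "component_of E S H" "a \<in> H" "b \<in> H"
  shows "\<exists>P. P \<noteq> [] \<and> hd P = a \<and> last P = b \<and> distinct P \<and> (\<forall>(s, t) \<in> set (pairs P). E s t)
     \<and> set P \<subseteq> H"
proof -
  define R where "R = (\<lambda>a b. E a b \<and> a \<in> S \<and> b \<in> S)"
  obtain x0 where x0: "x0 \<in> S" "H = {y \<in> S. R\<^sup>*\<^sup>* x0 y}"
    using assms(2) unfolding component_of_def R_def by blast
  have Rs: "\<And>a b. R a b \<Longrightarrow> R b a" using sym unfolding R_def by blast
  have "R\<^sup>*\<^sup>* x0 a" using assms(3) x0 by blast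
  then have "R\<^sup>*\<^sup>* a x0" using rtranclp_sym[of R x0 a] Rs by blast
  then have ab: "R\<^sup>*\<^sup>* a b" using assms(4) x0 by auto
  obtain P where P: "P \<noteq> []" "hd P = a" "last P = b" "distinct P" "\<forall>(s, t) \<in> set (pairs P). R s t"
     "set P \<subseteq> {z. R\<^sup>*\<^sup>* a z}" using walk_path[OF ab] by blast
  have inS: "\<And>z. R\<^sup>*\<^sup>* a z \<Longrightarrow> z \<in> S"
  proof -
    fix z assume "R\<^sup>*\<^sup>* a z" then show "z \<in> S"
      by (induction rule: rtranclp_induct) (use assms(3) x0 R_def in auto)
  qed
  have "set P \<subseteq> H"
  proof
    fix z assume "z \<in> set P" then have "R\<^sup>*\<^sup>* a z" using P by auto
    then show "z \<in> H" using x0 assms(3) inS by auto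
  qed
  moreover have "\<forall>(s, t) \<in> set (pairs P). E s t" using P(5) R_def by auto
  ultimately show ?thesis using P by blast
qed




lemma finite_ind_edges: "finite S \<Longrightarrow> finite (ind_edges E S)"
  by (rule finite_subset[of _ "Pow S"]) (auto simp: ind_edges_def)

lemma chord_transfer:
  assumes fin: "finite (set zs)" and sub: "set ys \<subseteq> set zs"
    and f1: "f \<in> cyc_edges ys" and f2: "f \<in> ind_edges E (set zs)" and f3: "f \<notin> cyc_edges zs"
    and ed: "\<forall>d \<in> cyc_edges zs. d \<subseteq> set ys \<longrightarrow> d \<in> cyc_edges ys \<or> d = e"
  shows "card (ind_edges E (set ys) - cyc_edges ys) \<le> card (ind_edges E (set zs) - cyc_edges zs)"
proof -
  define K where "K = ind_edges E (set ys) - cyc_edges ys"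
  define K' where "K' = ind_edges E (set zs) - cyc_edges zs"
  have finK: "finite K" unfolding K_def using fin sub finite_subset finite_ind_edges by blast
  have finK': "finite K'" unfolding K'_def using fin finite_ind_edges by blast
  have "insert f (K - {e}) \<subseteq> K'"
  proof
    fix d assume "d \<in> insert f (K - {e})"
    then show "d \<in> K'"
    proof
      assume "d = f" then show ?thesis using f2 f3 K'_def by simp
    next
      assume d: "d \<in> K - {e}"
      then have "d \<in> ind_edges E (set zs)" using sub unfolding K_def ind_edges_def by blast
      moreover have "d \<subseteq> set ys" using d unfolding K_def ind_edges_def by blast
      then have "d \<notin> cyc_edges zs" using ed d unfolding K_def by blast
      ultimately show ?thesis unfolding K'_def by blast
    qed
  qed
  then have "card (insert f (K - {e})) \<le> card K'" using finK' card_mono by blast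
  moreover have "f \<notin> K" using f1 K_def by blast
  then have "card (insert f (K - {e})) = Suc (card (K - {e}))" using finK by simp
  moreover have "card K \<le> Suc (card (K - {e}))" using finK
    by (cases "e \<in> K") (auto simp: card_Diff_singleton)
  ultimately show ?thesis unfolding K_def K'_def by linarith
qed

locale gsetup =
  fixes V :: "'a set" and E :: "'a \<Rightarrow> 'a \<Rightarrow> bool" and L :: "'a set"
    and k c :: nat and Cs :: "nat \<Rightarrow> 'a list" and H :: "'a set" and p :: nat
  assumes G: "simple_graph V E"
    and fam: "disjoint_chorded_family V E c k Cs"
    and A1: "\<forall>Ds. disjoint_chorded_family V E c k Ds \<longrightarrow>
               card (family_verts k Ds \<inter> L) \<le> card (family_verts k Cs \<inter> L)"
    and A2: "\<forall>Ds. disjoint_chorded_family V E c k Ds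
               \<and> card (family_verts k Ds \<inter> L) = card (family_verts k Cs \<inter> L) \<longrightarrow>
               card (family_verts k Ds) \<le> card (family_verts k Cs)"
    and H: "component_of E (V - family_verts k Cs) H"
    and p: "p < k"
begin

abbreviation "F \<equiv> family_verts k Cs"
abbreviation "xs \<equiv> Cs p"

lemma finV: "finite V" using G unfolding simple_graph_def by blast
lemma Esym: "E a b \<Longrightarrow> E b a" using G unfolding simple_graph_def by blast
lemma Eirr: "\<not> E a a" using G unfolding simple_graph_def by blast
lemma EV: "E a b \<Longrightarrow> a \<in> V \<and> b \<in> V" using G unfolding simple_graph_def by blast

lemma chorded_xs: "chorded_cycle V E c xs" using fam p unfolding disjoint_chorded_family_def by blast
lemma cyc_xs: "is_cycle V E xs" using chorded_xs unfolding chorded_cycle_def by blast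
lemma xs_len: "length xs \<ge> 3" using cyc_xs unfolding is_cycle_def by blast
lemma xs_dist: "distinct xs" using cyc_xs unfolding is_cycle_def by blast
lemma xs_V: "set xs \<subseteq> V" using cyc_xs unfolding is_cycle_def by blast
lemma xs_F: "set xs \<subseteq> F" using p unfolding family_verts_def by blast
lemma H_S: "H \<subseteq> V - F" using comp_sub[OF H] .
lemma xs_ne: "xs \<noteq> []" using xs_len by auto
lemma xs_E: "\<forall>(a, b) \<in> set (cpairs xs). E a b"
  using cyc_xs cyc_E_cpairs[OF xs_ne, of E] unfolding is_cycle_def by blast
lemma family_V: "q < k \<Longrightarrow> set (Cs q) \<subseteq> V"
  using fam unfolding disjoint_chorded_family_def chorded_cycle_def is_cycle_def by blast
lemma F_V: "F \<subseteq> V" using family_V unfolding family_verts_def by auto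

lemma improve:
  assumes zs: "chorded_cycle V E c zs" and set_zs: "set zs = set xs \<union> Q"
    and QH: "Q \<subseteq> H" and Qne: "Q \<noteq> {}"
  shows False
proof -
  define Ds where "Ds = Cs(p := zs)"
  have QF: "Q \<inter> F = {}" using QH H_S by blast
  have "disjoint_chorded_family V E c k Ds"
    unfolding disjoint_chorded_family_def
  proof (intro conjI allI impI)
    fix q assume "q < k" then show "chorded_cycle V E c (Ds q)"
      using fam zs unfolding Ds_def disjoint_chorded_family_def by auto
  next
    fix q r assume qr: "q < k" "r < k" "q \<noteq> r"
    have dis: "\<And>q r. q < k \<Longrightarrow> r < k \<Longrightarrow> q \<noteq> r \<Longrightarrow> set (Cs q) \<inter> set (Cs r) = {}"
      using fam unfolding disjoint_chorded_family_def by blast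
    have qF: "\<And>q. q < k \<Longrightarrow> set (Cs q) \<subseteq> F" unfolding family_verts_def by blast
    show "set (Ds q) \<inter> set (Ds r) = {}"
    proof (cases "q = p")
      case True
      then have "r \<noteq> p" using qr by simp
      then have "set (Ds q) = set xs \<union> Q" "set (Ds r) = set (Cs r)" using True set_zs Ds_def by auto
      then show ?thesis using dis[OF p qr(2)] \<open>r \<noteq> p\<close> qF[OF qr(2)] QF by blast
    next
      case False
      show ?thesis
      proof (cases "r = p")
        case True
        then have "set (Ds r) = set xs \<union> Q" "set (Ds q) = set (Cs q)" using False set_zs Ds_def by auto
        then show ?thesis using dis[OF qr(1) p] False qF[OF qr(1)] QF by blast
      next
        case False2: False
        then show ?thesis using dis[OF qr] False Ds_def by simp
      qed
    qed
  qed
  moreover have FD: "family_verts k Ds = F \<union> Q"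
    unfolding Ds_def family_verts_def using set_zs p by (auto split: if_splits)
  moreover have finFQ: "finite (F \<union> Q)" using F_V QH H_S finV by (meson Diff_subset finite_Un rev_finite_subset subset_trans)
  ultimately have "card (F \<inter> L) \<le> card ((F \<union> Q) \<inter> L)"
    by (intro card_mono) auto
  moreover have "card ((F \<union> Q) \<inter> L) \<le> card (F \<inter> L)"
    using A1 \<open>disjoint_chorded_family V E c k Ds\<close> FD by metis
  ultimately have eq: "card (family_verts k Ds \<inter> L) = card (F \<inter> L)"
    using FD by simp
  have "card (F \<union> Q) \<le> card F" using A2 \<open>disjoint_chorded_family V E c k Ds\<close> FD eq by metis
  moreover have "F \<subset> F \<union> Q" using QF Qne by blast
  then have "card F < card (F \<union> Q)" using finFQ by (rule psubset_card_mono[rotated])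
  ultimately show False by simp
qed

end



lemma pairs_mid: "R \<noteq> [] \<Longrightarrow> pairs (w # R @ [v]) = (w, hd R) # pairs R @ [(last R, v)]"
  by (simp add: pairs_Cons pairs_append)

context gsetup begin

lemma rot_decomp:
  assumes i: "i < length xs"
  shows "\<exists>R. R \<noteq> [] \<and> set (xs ! i # cyc_succ xs i # R) = set xs \<and> distinct (xs ! i # cyc_succ xs i # R)
    \<and> set (cpairs (xs ! i # cyc_succ xs i # R)) = set (cpairs xs)"
proof -
  define ys where "ys = rotate i xs"
  have len: "length ys = length xs" using ys_def by simp
  have y0: "ys ! 0 = xs ! i" using ys_def i xs_ne nth_rotate[of 0 xs i] by simp
  have y1: "ys ! 1 = cyc_succ xs i" using ys_def i xs_len by (simp add: nth_rotate cyc_succ_def)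
  obtain a b R where abR: "ys = a # b # R" using len xs_len
    by (metis One_nat_def Suc_1 Suc_le_length_iff numeral_3_eq_3)
  have "R \<noteq> []" using abR len xs_len by auto
  moreover have "a = xs ! i" "b = cyc_succ xs i" using abR y0 y1 by auto
  moreover have "set ys = set xs" "distinct ys" using ys_def xs_dist by auto
  ultimately show ?thesis using abR ys_def cpairs_rotate[of i xs]
    by (intro exI[of _ R]) simp
qed

lemma cyc_edges_eq: "set (cpairs ys) = set (cpairs xs) \<Longrightarrow> ys \<noteq> [] \<Longrightarrow> cyc_edges ys = cyc_edges xs"
  using cyc_edges_cpairs xs_ne by metis

lemma chords_xs: "card (ind_edges E (set xs) - cyc_edges xs) \<ge> c"
  using chorded_xs unfolding chorded_cycle_def by blast

lemma part_i:
  assumes i: "i < length xs" and v: "xs ! i \<in> nbhd_set E (set xs) H" and x: "x \<in> H"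
  shows "\<not> E (cyc_succ xs i) x"
proof
  assume wx: "E (cyc_succ xs i) x"
  define v where "v = xs ! i"
  define w where "w = cyc_succ xs i"
  obtain R where R: "R \<noteq> []" "set (v # w # R) = set xs" "distinct (v # w # R)"
      "set (cpairs (v # w # R)) = set (cpairs xs)"
    using rot_decomp[OF i] unfolding v_def w_def by blast
  define ys where "ys = v # w # R"
  obtain y where y: "y \<in> H" "E y v" using v unfolding v_def nbhd_set_def nbhd_def by blast
  obtain P where P: "P \<noteq> []" "hd P = y" "last P = x" "distinct P" "\<forall>(s, t) \<in> set (pairs P). E s t"
     "set P \<subseteq> H" using comp_path[OF _ H y(1) x] Esym by blast
  have Pdis: "set P \<inter> set xs = {}" using P(6) H_S xs_F by blast
  define zs where "zs = v # P @ w # R"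
  have cz: "cpairs zs = (v, hd P) # pairs P @ (last P, w) # (w, hd R) # pairs R @ [(last R, v)]"
    unfolding zs_def cpairs_def using P(1) R(1) by (simp add: pairs_Cons pairs_append)
  have cy: "cpairs ys = (v, w) # (w, hd R) # pairs R @ [(last R, v)]"
    unfolding ys_def cpairs_def using R(1) by (simp add: pairs_Cons pairs_append)
  have setz: "set zs = set xs \<union> set P" using R(2) unfolding zs_def by auto
  have distz: "distinct zs" using R(3) P(4) Pdis R(2) unfolding zs_def by auto
  have oldE: "\<forall>(a, b) \<in> set (cpairs ys). E a b" using xs_E R(4) ys_def by simp
  have hdP: "hd P \<in> set P" "last P \<in> set P" using P(1) by auto
  have hdR: "hd R \<in> set R" "last R \<in> set R" using R(1) by auto
  have pP: "set (pairs P) \<subseteq> set P \<times> set P" "set (pairs R) \<subseteq> set R \<times> set R" by (rule set_pairs_sub)+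
  have Ez: "\<forall>(a, b) \<in> set (cpairs zs). E a b"
    using oldE P y wx Esym unfolding cz cy w_def by auto
  have lenz: "length zs \<ge> 3" using R(1) P(1) unfolding zs_def by (cases R; cases P) auto
  have cycz: "is_cycle V E zs"
    unfolding is_cycle_def using lenz distz setz xs_V P(6) H_S Ez cyc_E_cpairs[of zs E]
    unfolding zs_def by auto
  have vw: "v \<noteq> w" "v \<notin> set R" "w \<notin> set R" using R(3) by auto
  have vwP: "v \<notin> set P" "w \<notin> set P" using Pdis R(2) by auto
  have "card (ind_edges E (set ys) - cyc_edges ys) \<le> card (ind_edges E (set zs) - cyc_edges zs)"
  proof (rule chord_transfer[where f = "{v, w}" and e = "{v, w}"])
    show "finite (set zs)" by simp
    show "set ys \<subseteq> set zs" unfolding ys_def zs_def by auto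
    show "{v, w} \<in> cyc_edges ys" using cyc_edges_cpairs[of ys] cy ys_def by force
    show "{v, w} \<in> ind_edges E (set zs)" using oldE unfolding ind_edges_def cy zs_def by auto
    have "\<forall>(a, b) \<in> set (cpairs zs). {a, b} \<noteq> {v, w}"
      using vw vwP hdP hdR pP unfolding cz by (auto simp: doubleton_eq_iff)
    then show "{v, w} \<notin> cyc_edges zs" using cyc_edges_cpairs[of zs] zs_def by auto
    have Pys: "set P \<inter> set ys = {}" using Pdis R(2) ys_def by simp
    have "\<forall>(a, b) \<in> set (cpairs zs). {a, b} \<subseteq> set ys \<longrightarrow> (a, b) \<in> set (cpairs ys)"
      using Pys hdP pP unfolding cz cy by auto
    then show "\<forall>d\<in>cyc_edges zs. d \<subseteq> set ys \<longrightarrow> d \<in> cyc_edges ys \<or> d = {v, w}"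
      using cyc_edges_cpairs[of zs] cyc_edges_cpairs[of ys] zs_def ys_def by auto
  qed
  moreover have "cyc_edges ys = cyc_edges xs" using cyc_edges_eq R(4) ys_def by simp
  ultimately have "card (ind_edges E (set zs) - cyc_edges zs) \<ge> c"
    using chords_xs R(2) ys_def by simp
  then have "chorded_cycle V E c zs" using cycz unfolding chorded_cycle_def by simp
  then show False using improve[OF _ setz P(6)] P(1) by simp
qed

end



context gsetup begin

lemma no_cross:
  assumes i: "i < length xs" and v: "xs ! i \<in> nbhd_set E (set xs) H" and x: "x \<in> H"
    and j: "j < length xs" and xu: "E x (xs ! j)" and uv: "xs ! j \<noteq> xs ! i"
    and uw: "xs ! j \<noteq> cyc_succ xs i" and u'v: "cyc_succ xs j \<noteq> xs ! i"
  shows "\<not> E (cyc_succ xs i) (cyc_succ xs j)"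
proof
  assume wu': "E (cyc_succ xs i) (cyc_succ xs j)"
  define v where "v = xs ! i"
  define w where "w = cyc_succ xs i"
  define u where "u = xs ! j"
  define u' where "u' = cyc_succ xs j"
  obtain R where R: "R \<noteq> []" "set (v # w # R) = set xs" "distinct (v # w # R)"
      "set (cpairs (v # w # R)) = set (cpairs xs)"
    using rot_decomp[OF i] unfolding v_def w_def by blast
  have "u \<in> set xs" using j u_def by simp
  then have "u \<in> set R" using R(2) uv uw u_def v_def w_def by auto
  then obtain R1 B2 where RR: "R = R1 @ u # B2" by (meson split_list)
  define B1 where "B1 = w # R1"
  define ys where "ys = v # B1 @ u # B2"
  have ysR: "ys = v # w # R" using RR ys_def B1_def by simp
  have cy0: "cpairs ys = (v, w) # pairs (B1 @ [u]) @ (u, hd (B2 @ [v])) # pairs (B2 @ [v])"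
  proof -
    have "cpairs ys = pairs (v # (B1 @ [u]) @ (B2 @ [v]))" unfolding ys_def cpairs_def by simp
    also have "\<dots> = (v, w) # pairs ((B1 @ [u]) @ (B2 @ [v]))" by (simp add: pairs_Cons B1_def)
    also have "\<dots> = (v, w) # pairs (B1 @ [u]) @ (u, hd (B2 @ [v])) # pairs (B2 @ [v])"
      by (subst pairs_append) auto
    finally show ?thesis .
  qed
  have "(u, u') \<in> set (cpairs xs)" using cyc_pairs[OF xs_ne] j u_def u'_def by blast
  moreover have "(u, hd (B2 @ [v])) \<in> set (cpairs xs)" using cy0 R(4) ysR by auto
  ultimately have "u' = hd (B2 @ [v])" using cpairs_unique xs_dist by metis
  then have B2: "B2 \<noteq> []" "u' = hd B2" using u'v u'_def v_def by (cases B2; auto)+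
  have cy: "set (cpairs ys) = {(v, w)} \<union> set (pairs (B1 @ [u])) \<union> {(u, hd B2)} \<union> set (pairs (B2 @ [v]))"
    using cy0 B2 by auto
  obtain y where y: "y \<in> H" "E y v" using v unfolding v_def nbhd_set_def nbhd_def by blast
  obtain P where P: "P \<noteq> []" "hd P = y" "last P = x" "distinct P" "\<forall>(s, t) \<in> set (pairs P). E s t"
     "set P \<subseteq> H" using comp_path[OF _ H y(1) x] Esym by blast
  have Pdis: "set P \<inter> set xs = {}" using P(6) H_S xs_F by blast
  define zs where "zs = v # P @ (u # rev B1) @ (B2 @ [v])"
  have zs_eq: "zs = v # P @ u # rev R1 @ w # B2 @ [v]" unfolding zs_def B1_def by simp
  have cz0: "pairs zs = (v, hd P) # pairs P @ (last P, u) # pairs (u # rev B1) @ (w, hd B2) # pairs (B2 @ [v])"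
  proof -
    have "pairs zs = (v, hd P) # pairs (P @ (u # rev B1) @ (B2 @ [v]))" unfolding zs_def
      using P(1) by (simp add: pairs_Cons)
    also have "\<dots> = (v, hd P) # pairs P @ (last P, u) # pairs ((u # rev B1) @ (B2 @ [v]))"
      using P(1) by (subst pairs_append) auto
    also have "pairs ((u # rev B1) @ (B2 @ [v])) = pairs (u # rev B1) @ (w, hd B2) # pairs (B2 @ [v])"
      using B2 by (subst pairs_append) (auto simp: B1_def)
    finally show ?thesis .
  qed
  define zl where "zl = v # P @ u # rev R1 @ w # B2"
  have zl_zs: "zl @ [hd zl] = v # P @ u # rev R1 @ w # B2 @ [v]" unfolding zl_def by simp
  have "pairs (u # rev B1) = rev (map prod.swap (pairs (B1 @ [u])))"
    by (metis pairs_rev rev.simps(2) rev_rev_ident)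
  then have cz: "set (cpairs zl) = {(v, hd P)} \<union> set (pairs P) \<union> {(last P, u)} \<union> prod.swap ` set (pairs (B1 @ [u]))
      \<union> {(w, hd B2)} \<union> set (pairs (B2 @ [v]))"
    unfolding cpairs_def zl_zs zs_eq[symmetric] cz0 by auto
  have setz: "set zl = set xs \<union> set P" using R(2) RR unfolding zl_def by auto
  have distz: "distinct zl" using R(3) P(4) Pdis R(2) RR unfolding zl_def by auto
  have oldE: "\<forall>(a, b) \<in> set (cpairs ys). E a b" using xs_E R(4) ysR by simp
  have hdP: "hd P \<in> set P" "last P \<in> set P" using P(1) by auto
  have hdB: "hd B2 \<in> set B2" using B2 by auto
  have pP: "set (pairs P) \<subseteq> set P \<times> set P" "set (pairs (B1 @ [u])) \<subseteq> set (B1 @ [u]) \<times> set (B1 @ [u])"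
     "set (pairs (B2 @ [v])) \<subseteq> set (B2 @ [v]) \<times> set (B2 @ [v])" by (rule set_pairs_sub)+
  have o1: "\<And>a b. (a, b) \<in> set (pairs (B1 @ [u])) \<Longrightarrow> E a b"
    and o2: "\<And>a b. (a, b) \<in> set (pairs (B2 @ [v])) \<Longrightarrow> E a b"
    using oldE unfolding cy by auto
  have Ez: "\<forall>(a, b) \<in> set (cpairs zl). E a b"
    using P y xu wu' Esym B2 o1 o2 unfolding cz w_def u_def u'_def by auto
  have lenz: "length zl \<ge> 3" using P(1) unfolding zl_def by (cases P) auto
  have cycz: "is_cycle V E zl"
    unfolding is_cycle_def using lenz distz setz xs_V P(6) H_S Ez cyc_E_cpairs[of zl E]
    unfolding zl_def by auto
  have dys: "distinct ys" using R(3) ysR by simp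
  have vwP: "v \<notin> set P" "w \<notin> set P" "set P \<inter> set ys = {}" using Pdis R(2) ysR by auto
  have "card (ind_edges E (set ys) - cyc_edges ys) \<le> card (ind_edges E (set zl) - cyc_edges zl)"
  proof (rule chord_transfer[where f = "{v, w}" and e = "{w, hd B2}"])
    show "finite (set zl)" by simp
    show "set ys \<subseteq> set zl" unfolding ys_def zl_def B1_def by auto
    show "{v, w} \<in> cyc_edges ys" using cyc_edges_cpairs[of ys] cy ys_def by force
    show "{v, w} \<in> ind_edges E (set zl)" using oldE unfolding ind_edges_def cy zl_def by auto
    have "\<forall>(a, b) \<in> set (cpairs zl). {a, b} \<noteq> {v, w}"
    proof (intro ballI, clarify)
      fix a b assume ab: "(a, b) \<in> set (cpairs zl)" and eq: "{a, b} = {v, w}"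
      then have vab: "v \<in> {a, b}" "w \<in> {a, b}" by auto
      have d1: "v \<notin> set B1 \<union> {u}" "w \<notin> set B2 \<union> {v}" "v \<noteq> w" "hd B2 \<noteq> v" "hd B2 \<noteq> w"
        using dys hdB unfolding ys_def B1_def by auto
      consider "(a, b) = (v, hd P)" | "(a, b) \<in> set (pairs P)" | "(a, b) = (last P, u)"
        | "(b, a) \<in> set (pairs (B1 @ [u]))" | "(a, b) = (w, hd B2)" | "(a, b) \<in> set (pairs (B2 @ [v]))"
        using ab unfolding cz by auto
      then show False
      proof cases
        case 1 then show ?thesis using vab(2) vwP(2) hdP(1) d1(3) by auto
      next
        case 2 then have "a \<in> set P" "b \<in> set P" using pP(1) by auto
        then show ?thesis using vab(1) vwP(1) by auto
      next
        case 3 then show ?thesis using vab(1) vwP(1) hdP(2) d1(1) by auto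
      next
        case 4
        have "(b, a) \<in> set (B1 @ [u]) \<times> set (B1 @ [u])" using pP(2) 4 by (rule subsetD)
        then have "a \<in> set (B1 @ [u])" "b \<in> set (B1 @ [u])" by (rule SigmaD2, rule SigmaD1)
        then have "v \<in> set (B1 @ [u])" using vab(1) by blast
        moreover have "set (B1 @ [u]) = set B1 \<union> {u}" by simp
        ultimately show ?thesis using d1(1) by simp
      next
        case 5 then show ?thesis using vab(1) d1(3,4) by auto
      next
        case 6 then have "a \<in> set B2 \<union> {v}" "b \<in> set B2 \<union> {v}" using pP(3) by auto
        then show ?thesis using vab(2) d1(2) by auto
      qed
    qed
    then show "{v, w} \<notin> cyc_edges zl" using cyc_edges_cpairs[of zl] zl_def by auto
    have key: "(a, b) \<in> set (cpairs ys) \<or> (b, a) \<in> set (cpairs ys) \<or> (a, b) = (w, hd B2)"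
      if ab: "(a, b) \<in> set (cpairs zl)" and sub: "{a, b} \<subseteq> set ys" for a b
    proof -
      have ays: "a \<in> set ys" "b \<in> set ys" using sub by auto
      consider "(a, b) = (v, hd P)" | "(a, b) \<in> set (pairs P)" | "(a, b) = (last P, u)"
        | "(b, a) \<in> set (pairs (B1 @ [u]))" | "(a, b) = (w, hd B2)" | "(a, b) \<in> set (pairs (B2 @ [v]))"
        using ab unfolding cz by auto
      then show ?thesis
      proof cases
        case 1 then have "b \<in> set P" using hdP(1) by simp
        then show ?thesis using ays(2) vwP(3) by blast
      next
        case 2 then have "a \<in> set P" using pP(1) by (meson SigmaD1 subsetD)
        then show ?thesis using ays(1) vwP(3) by blast
      next
        case 3 then have "a \<in> set P" using hdP(2) by simp
        then show ?thesis using ays(1) vwP(3) by blast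
      next
        case 4 then have "(b, a) \<in> set (cpairs ys)" unfolding cy by blast
        then show ?thesis by blast
      next
        case 5 then show ?thesis by blast
      next
        case 6 then have "(a, b) \<in> set (cpairs ys)" unfolding cy by blast
        then show ?thesis by blast
      qed
    qed
    show "\<forall>d\<in>cyc_edges zl. d \<subseteq> set ys \<longrightarrow> d \<in> cyc_edges ys \<or> d = {w, hd B2}"
    proof (intro ballI impI)
      fix d assume d: "d \<in> cyc_edges zl" "d \<subseteq> set ys"
      obtain a b where ab: "(a, b) \<in> set (cpairs zl)" "d = {a, b}"
        using d(1) cyc_edges_cpairs[of zl] zl_def by auto
      have ce: "cyc_edges ys = (\<lambda>(a, b). {a, b}) ` set (cpairs ys)" using cyc_edges_cpairs[of ys] ys_def by simp
      from key[OF ab(1)] d(2) ab(2) consider "(a, b) \<in> set (cpairs ys)" | "(b, a) \<in> set (cpairs ys)" | "(a, b) = (w, hd B2)"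
        by blast
      then show "d \<in> cyc_edges ys \<or> d = {w, hd B2}"
      proof cases
        case 1 then have "{a, b} \<in> cyc_edges ys" unfolding ce by force
        then show ?thesis using ab(2) by simp
      next
        case 2 then have "{b, a} \<in> cyc_edges ys" unfolding ce by force
        then show ?thesis using ab(2) by (simp add: insert_commute)
      next
        case 3 then show ?thesis using ab(2) by simp
      qed
    qed
  qed
  moreover have "cyc_edges ys = cyc_edges xs" using cyc_edges_eq R(4) ysR by simp
  ultimately have "card (ind_edges E (set zl) - cyc_edges zl) \<ge> c"
    using chords_xs R(2) ysR by simp
  then have "chorded_cycle V E c zl" using cycz unfolding chorded_cycle_def by simp
  then show False using improve[OF _ setz P(6)] P(1) by simp
qed

end



context gsetup begin

lemma part_ii:
  assumes i: "i < length xs" and v: "xs ! i \<in> nbhd_set E (set xs) H" and x: "x \<in> H"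
  shows "deg_in E ((V - F) \<union> set xs) (cyc_succ xs i) + deg_in E ((V - F) \<union> set xs) x
      \<le> card ((V - F) \<union> set xs) - 1"
proof -
  define S where "S = V - F"
  define C where "C = set xs"
  define w where "w = cyc_succ xs i"
  define n where "n = length xs"
  have finS: "finite S" using finV S_def by simp
  have finC: "finite C" using C_def by simp
  have SC: "S \<inter> C = {}" using xs_F S_def C_def by blast
  have xS: "x \<in> S" using x H_S S_def by blast
  have HS: "H \<subseteq> S" using H_S S_def by simp
  have nb: "\<And>z. nbhd E (S \<union> C) z = nbhd E S z \<union> nbhd E C z" unfolding nbhd_def by auto
  have d1: "card (nbhd E (S \<union> C) z) \<le> card (nbhd E S z) + card (nbhd E C z)" for z
    unfolding nb by (rule card_Un_le)
  have nSw: "nbhd E S w \<subseteq> S - H" using part_i[OF i v] w_def unfolding nbhd_def by auto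
  have nSx: "nbhd E S x \<subseteq> H - {x}"
    using comp_closed[OF H x] Eirr unfolding nbhd_def S_def by auto
  have "card (nbhd E S w) + card (nbhd E S x) \<le> card (S - H) + card (H - {x})"
  proof -
    have f1: "finite (S - H)" using finS by simp
    have f2: "finite (H - {x})" using finS HS finite_subset by blast
    show ?thesis using add_mono[OF card_mono[OF f1 nSw] card_mono[OF f2 nSx]] .
  qed
  also have "\<dots> = card ((S - H) \<union> (H - {x}))"
    using finS HS by (subst card_Un_disjoint) (auto intro: finite_subset)
  also have "(S - H) \<union> (H - {x}) = S - {x}" using HS x by auto
  also have "card (S - {x}) = card S - 1" using xS finS by simp
  finally have partS: "card (nbhd E S w) + card (nbhd E S x) \<le> card S - 1" .
  define J where "J = {j. j < n \<and> E x (xs ! j)}"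
  have distx: "distinct xs" by (rule xs_dist)
  have injn: "inj_on (\<lambda>j. xs ! j) {..<n}" using distx n_def by (simp add: inj_on_def nth_eq_iff_index_eq)
  have nCx: "nbhd E C x = (\<lambda>j. xs ! j) ` J" unfolding nbhd_def C_def J_def n_def
    by (auto simp: in_set_conv_nth)
  have Jsub: "J \<subseteq> {..<n}" unfolding J_def by auto
  have cardJ: "card (nbhd E C x) = card J" unfolding nCx
    using card_image inj_on_subset[OF injn Jsub] by blast
  have n0: "n > 0" using xs_ne n_def by simp
  have injs: "inj_on (cyc_succ xs) {..<n}"
  proof (rule inj_onI)
    fix a b assume ab: "a \<in> {..<n}" "b \<in> {..<n}" "cyc_succ xs a = cyc_succ xs b"
    then have "(a + 1) mod n = (b + 1) mod n"
      using distx n0 unfolding cyc_succ_def n_def by (simp add: nth_eq_iff_index_eq)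
    then show "a = b" using ab(1,2)
      by (simp add: mod_Suc split: if_splits)
  qed
  have cardfJ: "card (cyc_succ xs ` J) = card J" using card_image inj_on_subset[OF injs Jsub] by blast
  have fJC: "cyc_succ xs ` J \<subseteq> C"
    using n0 unfolding C_def J_def cyc_succ_def n_def by auto
  have disj: "cyc_succ xs ` J \<inter> nbhd E C w = {}"
  proof (rule ccontr)
    assume "cyc_succ xs ` J \<inter> nbhd E C w \<noteq> {}"
    then obtain j where j: "j < n" "E x (xs ! j)" "E w (cyc_succ xs j)"
      unfolding J_def nbhd_def by blast
    show False
    proof (cases "xs ! j = xs ! i")
      case True then have "j = i" using nth_eq_iff_index_eq[OF distx, of j i] j(1) i n_def by simp
      then show False using j(3) Eirr w_def by simp
    next
      case False
      show False
      proof (cases "xs ! j = w")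
        case True then have "E x w" using j(2) by simp
        then have "E w x" by (rule Esym)
        then show False using part_i[OF i v x] w_def by simp
      next
        case False2: False
        have jv: "xs ! j \<in> nbhd_set E (set xs) H"
          using x j(1,2) n_def unfolding nbhd_set_def nbhd_def by auto
        have "cyc_succ xs j \<noteq> xs ! i"
        proof
          assume eq: "cyc_succ xs j = xs ! i"
          obtain y where y: "y \<in> H" "E y (xs ! i)" using v unfolding nbhd_set_def nbhd_def by blast
          have "j < length xs" using j(1) n_def by simp
          then have "\<not> E (cyc_succ xs j) y" using part_i[OF _ jv y(1)] by blast
          moreover have "E (xs ! i) y" using y(2) by (rule Esym)
          ultimately show False using eq by simp
        qed
        moreover have "j < length xs" using j(1) n_def by simp
        moreover have "xs ! j \<noteq> cyc_succ xs i" using False2 w_def by simp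
        ultimately have "\<not> E (cyc_succ xs i) (cyc_succ xs j)" using no_cross[OF i v x _ j(2) False] by blast
        then show False using j(3) w_def by simp
      qed
    qed
  qed
  have "card (nbhd E C x) + card (nbhd E C w) = card (cyc_succ xs ` J \<union> nbhd E C w)"
    using cardJ cardfJ disj finC fJC by (subst card_Un_disjoint) (auto simp: nbhd_def intro: finite_subset)
  also have "\<dots> \<le> card C" using fJC finC by (intro card_mono) (auto simp: nbhd_def)
  finally have partC: "card (nbhd E C x) + card (nbhd E C w) \<le> card C" .
  have "card (S \<union> C) = card S + card C" using finS finC SC by (rule card_Un_disjoint)
  moreover have "card S > 0" using xS finS card_gt_0_iff by blast
  ultimately show ?thesis using partS partC d1[of w] d1[of x]
    unfolding deg_in_def S_def[symmetric] C_def[symmetric] w_def[symmetric] by linarith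
qed

end

theorem lemma1:
  fixes V :: "'a set" and E :: "'a \<Rightarrow> 'a \<Rightarrow> bool" and L :: "'a set"
    and k c :: nat and Cs :: "nat \<Rightarrow> 'a list"
    and H :: "'a set" and p i :: nat and x :: 'a
  assumes G: "simple_graph V E"
    and kpos: "k > 0" and cpos: "c > 0"
    and L: "L \<subseteq> V"
    and fam: "disjoint_chorded_family V E c k Cs"
    and nonspan: "family_verts k Cs \<noteq> V"
    and A1: "\<forall>Ds. disjoint_chorded_family V E c k Ds \<longrightarrow>
               card (family_verts k Ds \<inter> L) \<le> card (family_verts k Cs \<inter> L)"
    and A2: "\<forall>Ds. disjoint_chorded_family V E c k Ds
               \<and> card (family_verts k Ds \<inter> L) = card (family_verts k Cs \<inter> L) \<longrightarrow>
               card (family_verts k Ds) \<le> card (family_verts k Cs)"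
    and H: "component_of E (V - family_verts k Cs) H"
    and p: "p < k"
    and i: "i < length (Cs p)"
    and v: "Cs p ! i \<in> nbhd_set E (set (Cs p)) H"
    and x: "x \<in> H"
  shows "\<not> E (cyc_succ (Cs p) i) x
    \<and> deg_in E ((V - family_verts k Cs) \<union> set (Cs p)) (cyc_succ (Cs p) i)
      + deg_in E ((V - family_verts k Cs) \<union> set (Cs p)) x
      \<le> card ((V - family_verts k Cs) \<union> set (Cs p)) - 1"
proof -
  interpret gsetup V E L k c Cs H p using G fam A1 A2 H p by unfold_locales
  show ?thesis using part_i[OF i v x] part_ii[OF i v x] by simp
qed

end
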